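(* Let $n,d$ be integers with $1\le d<n$ and set $\bar k_i=\lfloor i(n+1)/(d+1)\rfloor$ for $i=1,\dots,d$. Then for $\bar\lambda_d=\binom{\bar k_d}{d}+\binom{\bar k_{d-1}}{d-1}+\cdots+\binom{\bar k_1}{1}$ we have $\delta_{n,d}(\bar\lambda_d)=\max_{0\le\lambda\le\binom nd}\delta_{n,d}(\lambda)$.
   Context: For integers $\lambda\ge0$ and $d\ge1$, $\lambda$ has a unique expansion $\lambda=\binom{k_d}{d}+\binom{k_{d-1}}{d-1}+\cdots+\binom{k_1}{1}$ with $k_d>k_{d-1}>\cdots>k_1\ge0$; define $\lambda^{[d]}=\binom{k_d}{d+1}+\binom{k_{d-1}}{d}+\cdots+\binom{k_1}{2}$. For $0\le\lambda\le\binom nd$ define $\delta_{n,d}(\lambda)=\frac{\lambda}{\binom nd}-\frac{\lambda^{[d]}}{\binom n{d+1}}$ (the difference between the linear bound and the Kruskal–Katona bound). *)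

theory Defs
  imports Complex_Main
begin

text \<open>d-cascade representation of lam: lam = sum_{i=1..d} (k_i choose i)
  with k_d > k_{d-1} > ... > k_1 >= 0 (only the values of k on {1..d} matter).\<close>
definition is_cascade :: "nat \<Rightarrow> nat \<Rightarrow> (nat \<Rightarrow> nat) \<Rightarrow> bool" where
  "is_cascade d lam k \<longleftrightarrow>
     (\<forall>i. 1 \<le> i \<longrightarrow> i < d \<longrightarrow> k i < k (Suc i)) \<and>
     lam = (\<Sum>i=1..d. k i choose i)"

text \<open>lam^[d] = sum_{i=1..d} (k_i choose (i+1)) for the (unique) cascade k of lam.\<close>
definition kk_upper :: "nat \<Rightarrow> nat \<Rightarrow> nat" where
  "kk_upper d lam = (let k = (SOME k. is_cascade d lam k) in (\<Sum>i=1..d. k i choose (i + 1)))"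

definition delta :: "nat \<Rightarrow> nat \<Rightarrow> nat \<Rightarrow> real" where
  "delta n d lam = real lam / real (n choose d) - real (kk_upper d lam) / real (n choose (d + 1))"

end

theory Submission
  imports Defs
begin

definition cs :: "nat \<Rightarrow> (nat \<Rightarrow> nat) \<Rightarrow> nat" where
  "cs d k = (\<Sum>i=1..d. k i choose i)"
definition ordk :: "nat \<Rightarrow> (nat \<Rightarrow> nat) \<Rightarrow> bool" where
  "ordk d k \<longleftrightarrow> (\<forall>i. 1 \<le> i \<longrightarrow> i < d \<longrightarrow> k i < k (Suc i))"

lemma cascade_iff: "is_cascade d lam k \<longleftrightarrow> ordk d k \<and> lam = cs d k"
  by (simp add: is_cascade_def ordk_def cs_def)

lemma cs_Suc: "cs (Suc d) k = cs d k + (k (Suc d) choose Suc d)"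
  by (simp add: cs_def)

lemma ordk_Suc: "ordk (Suc d) k \<longleftrightarrow> ordk d k \<and> (d \<ge> 1 \<longrightarrow> k d < k (Suc d))"
  by (auto simp: ordk_def less_Suc_eq)

lemma cs_bound: "ordk d k \<Longrightarrow> d \<ge> 1 \<Longrightarrow> cs d k < (Suc (k d) choose d)"
proof (induction d)
  case 0 thus ?case by simp
next
  case (Suc d)
  show ?case
  proof (cases "d = 0")
    case True thus ?thesis by (simp add: cs_def)
  next
    case False
    hence o: "ordk d k" and lt: "k d < k (Suc d)" using Suc.prems ordk_Suc by auto
    have "cs d k < Suc (k d) choose d" using Suc.IH o False by auto
    also have "\<dots> \<le> k (Suc d) choose d" using lt binomial_right_mono by auto
    finally have "cs d k < k (Suc d) choose d" .
    then show ?thesis by (simp add: cs_Suc)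
  qed
qed

lemma cs_unique: "ordk d k \<Longrightarrow> ordk d k' \<Longrightarrow> cs d k = cs d k' \<Longrightarrow> i \<in> {1..d} \<Longrightarrow> k i = k' i"
proof (induction d arbitrary: i)
  case 0 thus ?case by simp
next
  case (Suc d)
  have A: "cs (Suc d) k < Suc (k (Suc d)) choose Suc d" "cs (Suc d) k' < Suc (k' (Suc d)) choose Suc d"
    using cs_bound[of "Suc d" k] cs_bound[of "Suc d" k'] Suc.prems(1,2) by (auto simp del: binomial_Suc_Suc)
  have B: "k (Suc d) choose Suc d \<le> cs (Suc d) k" "k' (Suc d) choose Suc d \<le> cs (Suc d) k'"
    by (auto simp: cs_Suc)
  have top: "k (Suc d) = k' (Suc d)"
  proof (rule ccontr)
    assume "k (Suc d) \<noteq> k' (Suc d)"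
    then consider "Suc (k (Suc d)) \<le> k' (Suc d)" | "Suc (k' (Suc d)) \<le> k (Suc d)" by linarith
    then show False
    proof cases
      case 1
      then have "Suc (k (Suc d)) choose Suc d \<le> k' (Suc d) choose Suc d" by (rule binomial_right_mono)
      then show False using A B Suc.prems(3) by linarith
    next
      case 2
      then have "Suc (k' (Suc d)) choose Suc d \<le> k (Suc d) choose Suc d" by (rule binomial_right_mono)
      then show False using A B Suc.prems(3) by linarith
    qed
  qed
  have "cs d k = cs d k'" using Suc.prems(3) top by (simp add: cs_Suc)
  moreover have "ordk d k" "ordk d k'" using Suc.prems ordk_Suc by auto
  ultimately show ?case using Suc.IH Suc.prems(4) top by (cases "i = Suc d") auto
qed

lemma cs_exists: "lam < (m choose d) \<Longrightarrow> \<exists>k. ordk d k \<and> cs d k = lam \<and> (d \<ge> 1 \<longrightarrow> k d < m)"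
proof (induction d arbitrary: lam m)
  case 0
  then show ?case by (intro exI[of _ "\<lambda>_. 0"]) (simp add: ordk_def cs_def)
next
  case (Suc d)
  have dm: "d < m"
  proof (rule ccontr)
    assume "\<not> d < m"
    then have "m choose Suc d = 0" by (simp add: binomial_eq_0)
    then show False using Suc.prems by linarith
  qed
  define K where "K = {x. x < m \<and> (x choose Suc d) \<le> lam}"
  have fK: "finite K" unfolding K_def by auto
  have dK: "d \<in> K" unfolding K_def using dm by (simp add: binomial_eq_0)
  define kt where "kt = Max K"
  have ktK: "kt \<in> K" unfolding kt_def using fK dK Max_in by blast
  hence ktm: "kt < m" and ktl: "(kt choose Suc d) \<le> lam" unfolding K_def by auto
  have up: "lam < Suc kt choose Suc d"
  proof (cases "Suc kt < m")
    case True
    have "Suc kt \<notin> K"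
    proof
      assume "Suc kt \<in> K"
      then have "Suc kt \<le> kt" unfolding kt_def using fK Max_ge by blast
      then show False by simp
    qed
    then show ?thesis using True unfolding K_def by auto
  next
    case False
    then have "Suc kt = m" using ktm by simp
    then show ?thesis using Suc.prems by simp
  qed
  then have "lam - (kt choose Suc d) < (kt choose d)" using ktl by simp
  from Suc.IH[OF this] obtain k' where k': "ordk d k'" "cs d k' = lam - (kt choose Suc d)"
    "d \<ge> 1 \<longrightarrow> k' d < kt" by blast
  define k where "k = k'(Suc d := kt)"
  have "ordk d k" using k'(1) unfolding k_def ordk_def by auto
  moreover have "d \<ge> 1 \<longrightarrow> k d < k (Suc d)" using k'(3) unfolding k_def by auto
  ultimately have "ordk (Suc d) k" using ordk_Suc by blast
  moreover have "cs d k = cs d k'" unfolding cs_def k_def by (rule sum.cong) auto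
  then have "cs (Suc d) k = lam" using k'(2) ktl by (simp add: cs_Suc k_def)
  moreover have "k (Suc d) < m" using ktm k_def by simp
  ultimately show ?case by blast
qed

lemma choose_big: "d \<ge> 1 \<Longrightarrow> lam < (lam + d) choose d"
proof (induction d)
  case 0 thus ?case by simp
next
  case (Suc d)
  show ?case
  proof (cases "d = 0")
    case True thus ?thesis by simp
  next
    case False
    then have "lam < (lam + d) choose d" using Suc.IH by simp
    then show ?thesis by simp
  qed
qed

lemma cascade_exists: "d \<ge> 1 \<Longrightarrow> \<exists>k. is_cascade d lam k"
  using cs_exists[OF choose_big[of d lam]] by (auto simp: cascade_iff)

lemma kk_upper_eq: "is_cascade d lam k \<Longrightarrow> kk_upper d lam = (\<Sum>i=1..d. k i choose (i + 1))"
proof -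
  assume h: "is_cascade d lam k"
  define k0 where "k0 = (SOME k. is_cascade d lam k)"
  have "is_cascade d lam k0" unfolding k0_def by (rule someI[where P="is_cascade d lam", OF h])
  then have "\<forall>i\<in>{1..d}. k0 i = k i" using h cs_unique by (auto simp: cascade_iff)
  then show ?thesis unfolding kk_upper_def k0_def[symmetric] Let_def by (intro sum.cong) auto
qed

definition g :: "nat \<Rightarrow> nat \<Rightarrow> nat \<Rightarrow> nat \<Rightarrow> real" where
  "g n d i x = real (x choose i) / real (n choose d) - real (x choose (i + 1)) / real (n choose (d + 1))"

lemma bin_step: "(x choose Suc j) * Suc j = (x choose j) * (x - j)"
proof -
  have "Suc x * (x choose j) = (x choose j) * Suc j + (x choose Suc j) * Suc j"
    using Suc_times_binomial_eq[of x j] by (simp add: algebra_simps)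
  then have "(x choose Suc j) * Suc j = Suc x * (x choose j) - Suc j * (x choose j)" by simp
  also have "\<dots> = (Suc x - Suc j) * (x choose j)" by (simp only: diff_mult_distrib)
  also have "\<dots> = (x choose j) * (x - j)" by simp
  finally show ?thesis .
qed

lemma alg: fixes a b N M xj nd D J :: real
  assumes "b * J = a * xj" "M * D = N * nd" "N \<noteq> 0" "M \<noteq> 0"
  shows "(a / N - b / M) * (M * D * J) = a * (nd * J - xj * D)"
proof -
  have "(a / N - b / M) * (M * D * J) = a * (M * D) * J / N - (b * J) * D"
    using assms(3,4) by (simp add: field_simps)
  also have "\<dots> = a * nd * J - a * xj * D" using assms by (simp add: field_simps)
  finally show ?thesis by (simp add: algebra_simps)
qed

lemma g_diff:
  assumes "d < n"
  shows "(g n d (Suc j) (Suc x) - g n d (Suc j) x) * (real (n choose (d+1)) * real (d+1) * real (Suc j))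
    = real (x choose j) * (real (n+1) * real (Suc j) - real (x+1) * real (d+1))"
proof -
  have N: "real (n choose d) \<noteq> 0" "real (n choose (d+1)) \<noteq> 0" using assms by auto
  have e: "g n d (Suc j) (Suc x) - g n d (Suc j) x
     = real (x choose j) / real (n choose d) - real (x choose Suc j) / real (n choose (d + 1))"
    unfolding g_def by (simp add: add_divide_distrib)
  have R2: "real (n choose (d+1)) * real (d+1) = real (n choose d) * real (n - d)"
    using bin_step[of n d] by (metis Suc_eq_plus1 of_nat_mult)
  show ?thesis
  proof (cases "j \<le> x")
    case True
    have R1: "real (x choose Suc j) * real (Suc j) = real (x choose j) * real (x - j)"
      using bin_step[of x j] by (metis of_nat_mult)
    show ?thesis unfolding e
      using alg[OF R1 R2 N] True assms by (simp add: of_nat_diff algebra_simps)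
  next
    case False
    then show ?thesis unfolding e by (simp add: binomial_eq_0)
  qed
qed

lemma mono_up: "(\<And>y. y < K \<Longrightarrow> h y \<le> h (Suc y)) \<Longrightarrow> x \<le> K \<Longrightarrow> h x \<le> (h K :: real)"
proof (induction K)
  case 0 thus ?case by simp
next
  case (Suc K)
  show ?case
  proof (cases "x = Suc K")
    case False
    then have "h x \<le> h K" using Suc by auto
    also have "\<dots> \<le> h (Suc K)" using Suc.prems by auto
    finally show ?thesis .
  qed simp
qed

lemma mono_down: "(\<And>y. K \<le> y \<Longrightarrow> h (Suc y) \<le> h y) \<Longrightarrow> K \<le> x \<Longrightarrow> h x \<le> (h K :: real)"
proof (induction x)
  case 0 thus ?case by simp
next
  case (Suc x)
  show ?case
  proof (cases "K = Suc x")
    case False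
    then have "h x \<le> h K" using Suc by auto
    moreover have "h (Suc x) \<le> h x" using Suc.prems False by auto
    ultimately show ?thesis by linarith
  qed simp
qed

lemma g_max:
  assumes "d < n" "1 \<le> i"
  shows "g n d i x \<le> g n d i (i * (n + 1) div (d + 1))"
proof -
  obtain j where i: "i = Suc j" using assms(2) by (cases i) auto
  define K where "K = i * (n + 1) div (d + 1)"
  define P where "P = real (n choose (d+1)) * real (d+1) * real (Suc j)"
  have P: "P > 0" unfolding P_def using assms(1) by auto
  have up: "g n d i y \<le> g n d i (Suc y)" if "y < K" for y
  proof -
    have "Suc y * (d + 1) \<le> i * (n + 1)" using that unfolding K_def
      using less_eq_div_iff_mult_less_eq[of "d+1" "Suc y" "i * (n+1)"] by simp
    then have "real (Suc y * (d + 1)) \<le> real (i * (n + 1))" by (rule of_nat_mono)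
    then have "real (y+1) * real (d+1) \<le> real (n+1) * real (Suc j)" unfolding i of_nat_mult by (simp add: mult.commute)
    then have "(g n d i (Suc y) - g n d i y) * P \<ge> 0" unfolding P_def i g_diff[OF assms(1)]
      by (intro mult_nonneg_nonneg) auto
    then show ?thesis using P by (metis diff_ge_0_iff_ge zero_le_mult_iff not_less)
  qed
  have down: "g n d i (Suc y) \<le> g n d i y" if "K \<le> y" for y
  proof -
    have "K < Suc y" using that by simp
    then have "i * (n + 1) < Suc y * (d + 1)" unfolding K_def
      using div_less_iff_less_mult[of "d+1" "i * (n+1)" "Suc y"] by simp
    then have "real (i * (n + 1)) \<le> real (Suc y * (d + 1))" by (intro of_nat_mono less_imp_le)
    then have "real (n+1) * real (Suc j) \<le> real (y+1) * real (d+1)" unfolding i of_nat_mult by (simp add: mult.commute)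
    then have "(g n d i (Suc y) - g n d i y) * P \<le> 0" unfolding P_def i g_diff[OF assms(1)]
      by (intro mult_nonneg_nonpos) auto
    then show ?thesis using P by (metis diff_le_0_iff_le mult_le_0_iff not_less)
  qed
  have "g n d i x \<le> g n d i K"
  proof (cases "x \<le> K")
    case True show ?thesis by (rule mono_up[of K "g n d i" x]) (use up True in auto)
  next
    case False show ?thesis by (rule mono_down[of K "g n d i" x]) (use down False in auto)
  qed
  then show ?thesis unfolding K_def .
qed

lemma delta_cascade: "is_cascade d lam k \<Longrightarrow> delta n d lam = (\<Sum>i=1..d. g n d i (k i))"
proof -
  assume h: "is_cascade d lam k"
  then have l: "lam = (\<Sum>i=1..d. k i choose i)" by (simp add: is_cascade_def)
  show ?thesis unfolding delta_def kk_upper_eq[OF h] g_def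
    by (subst l) (simp add: of_nat_sum sum_divide_distrib sum_subtractf)
qed

theorem proposition5p3:
  fixes n d :: nat
  assumes "1 \<le> d" and "d < n"
  defines "kbar \<equiv> (\<lambda>i. (i * (n + 1)) div (d + 1))"
  defines "lambar \<equiv> (\<Sum>i=1..d. kbar i choose i)"
  shows "delta n d lambar = Max {delta n d lam | lam. lam \<le> n choose d}"
proof -
  have ord: "ordk d kbar" unfolding ordk_def
  proof (intro allI impI)
    fix i assume "1 \<le> i" "i < d"
    have "i * (n + 1) div (d + 1) < i * (n + 1) div (d + 1) + 1" by simp
    also have "\<dots> = (i * (n + 1) + (d + 1)) div (d + 1)"
      by (rule div_add_self2[symmetric]) simp
    also have "\<dots> \<le> (Suc i * (n + 1)) div (d + 1)"
      by (rule div_le_mono) (use assms(2) in simp)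
    finally show "kbar i < kbar (Suc i)" unfolding kbar_def .
  qed
  have cas: "is_cascade d lambar kbar" using ord by (simp add: cascade_iff cs_def lambar_def)
  have top: "kbar d < n" unfolding kbar_def
  proof -
    have "d * (n + 1) < n * (d + 1)" using assms(2) by (simp add: algebra_simps)
    then show "d * (n + 1) div (d + 1) < n" by (simp add: div_less_iff_less_mult)
  qed
  have "lambar < Suc (kbar d) choose d" using cs_bound[OF ord assms(1)] by (simp add: lambar_def cs_def)
  also have "\<dots> \<le> n choose d" using top by (intro binomial_right_mono) simp
  finally have le: "lambar \<le> n choose d" by simp
  have bound: "delta n d lam \<le> delta n d lambar" if "lam \<le> n choose d" for lam
  proof -
    obtain k where k: "is_cascade d lam k" using cascade_exists[OF assms(1)] by blast
    have "delta n d lam = (\<Sum>i=1..d. g n d i (k i))" by (rule delta_cascade[OF k])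
    also have "\<dots> \<le> (\<Sum>i=1..d. g n d i (kbar i))"
      by (rule sum_mono) (use g_max[OF assms(2)] in \<open>auto simp: kbar_def\<close>)
    also have "\<dots> = delta n d lambar" by (rule delta_cascade[OF cas, symmetric])
    finally show ?thesis .
  qed
  have S: "{delta n d lam | lam. lam \<le> n choose d} = delta n d ` {..n choose d}" by auto
  show ?thesis unfolding S
    by (rule Max_eqI[symmetric]) (use bound le in auto)
qed

end
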